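(* Let $A_1,A_2\in\mathbb{R}^{n\times n}$ be symmetric positive semidefinite and $\mathcal{A}=(A_1,A_2)$. Then $\mathrm{Opt}(\mathcal{A})=\mathrm{OptSDP}(\mathcal{A})$.
   Context: Here $\mathbb{K}=\mathbb{R}$: $\mathrm{Opt}(\mathcal{A})=\max_{x\in\mathbb{R}^n,\|x\|=1}\big(\prod_{i=1}^d x^TA_ix\big)^{1/d}$ and $\mathrm{OptSDP}(\mathcal{A})=\max\big\{\big(\prod_{i=1}^d\operatorname{Tr}(A_iX)\big)^{1/d}: X\in\mathbb{R}^{n\times n}\text{ symmetric},\ X\succeq0,\ \operatorname{Tr}X=1\big\}$, with $d=2$. *)

theory Defs
  imports "HOL-Analysis.Analysis"
begin

definition sym_mat :: "real^'n^'n \<Rightarrow> bool" where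
  "sym_mat A \<longleftrightarrow> transpose A = A"

definition psd_mat :: "real^'n^'n \<Rightarrow> bool" where
  "psd_mat A \<longleftrightarrow> sym_mat A \<and> (\<forall>x. 0 \<le> x \<bullet> (A *v x))"

definition Opt2 :: "real^'n^'n \<Rightarrow> real^'n^'n \<Rightarrow> real" where
  "Opt2 A1 A2 = Sup {((x \<bullet> (A1 *v x)) * (x \<bullet> (A2 *v x))) powr (1/2) | x. norm x = 1}"

definition OptSDP2 :: "real^'n^'n \<Rightarrow> real^'n^'n \<Rightarrow> real" where
  "OptSDP2 A1 A2 = Sup {(trace (A1 ** X) * trace (A2 ** X)) powr (1/2) | X. psd_mat X \<and> trace X = 1}"

end

theory Submission
  imports Defs
begin

lemma sym_inner:
  assumes "sym_mat A" shows "w \<bullet> (A *v v) = v \<bullet> (A *v w)"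
proof -
  have "w \<bullet> (A *v v) = (w v* A) \<bullet> v" by (simp add: dot_lmul_matrix)
  also have "w v* A = transpose A *v w" by simp
  also have "\<dots> = A *v w" using assms by (simp add: sym_mat_def)
  finally show ?thesis by (simp add: inner_commute)
qed

lemma qf_comb:
  assumes "sym_mat A"
  shows "(a *\<^sub>R v + b *\<^sub>R w) \<bullet> (A *v (a *\<^sub>R v + b *\<^sub>R w)) =
     a^2 * (v \<bullet> (A *v v)) + 2*a*b * (v \<bullet> (A *v w)) + b^2 * (w \<bullet> (A *v w))"
  using sym_inner[OF assms, of w v]
  by (simp add: matrix_vector_right_distrib matrix_vector_mult_scaleR inner_add_left inner_add_right algebra_simps power2_eq_square)

lemma discr:
  fixes a b c :: real
  assumes h: "\<And>t. 0 \<le> a + 2*b*t + c*t^2"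
  shows "b^2 \<le> a*c \<and> 0 \<le> c \<and> 0 \<le> a"
proof -
  have a: "0 \<le> a" using h[of 0] by simp
  have c: "0 \<le> c"
  proof (rule ccontr)
    assume "\<not> 0 \<le> c"
    hence c0: "c < 0" by simp
    define t where "t = max 1 ((2*\<bar>b\<bar> + a + 1) / (- c))"
    have t1: "t \<ge> 1" unfolding t_def by simp
    have "t \<ge> (2*\<bar>b\<bar> + a + 1) / (- c)" unfolding t_def by simp
    hence "(-c) * t \<ge> 2*\<bar>b\<bar> + a + 1" using c0 by (simp add: field_simps)
    hence "c*t + 2*\<bar>b\<bar> + a \<le> -1" by simp
    hence "t * (c*t + 2*\<bar>b\<bar> + a) \<le> t * (-1)" using t1 by (intro mult_left_mono) auto
    moreover have "a + 2*b*t + c*t^2 \<le> t * (c*t + 2*\<bar>b\<bar> + a)"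
    proof -
      have "2*b*t \<le> 2*\<bar>b\<bar>*t" using t1 by (intro mult_right_mono) auto
      moreover have "a \<le> a * t" using t1 a by (simp add: mult_le_cancel_left1)
      ultimately show ?thesis by (simp add: algebra_simps power2_eq_square)
    qed
    ultimately show False using h[of t] t1 by linarith
  qed
  have "b^2 \<le> a*c"
  proof (cases "c = 0")
    case True
    have "b = 0"
    proof (rule ccontr)
      assume "b \<noteq> 0"
      have "a + 2*b*(-(a+1)/(2*b)) + c*(-(a+1)/(2*b))^2 = -1" using True \<open>b\<noteq>0\<close> by (simp add: field_simps)
      thus False using h[of "-(a+1)/(2*b)"] by simp
    qed
    thus ?thesis using True by simp
  next
    case False
    hence cp: "c > 0" using c by simp
    have "a + 2*b*(-b/c) + c*(-b/c)^2 = a - b^2/c" using cp by (simp add: field_simps power2_eq_square)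
    hence "0 \<le> a - b^2/c" using h[of "-b/c"] by simp
    thus ?thesis using cp by (simp add: field_simps)
  qed
  thus ?thesis using a c by simp
qed
lemma alg_norm:
  fixes A S U :: real
  assumes "0 \<le> A" "0 \<le> 2-(S+U)+4*A" "0 \<le> 1-S*U"
    "A*(S-U)^2 \<le> (2-(S+U)+4*A)*(1-S*U)"
  shows "S+U \<le> 2"
proof (rule ccontr)
  assume "\<not> S+U \<le> 2"
  hence g: "S+U > 2" by simp
  have id: "(2-(S+U)+4*A)*(1-S*U) - A*(S-U)^2 = (2-(S+U))*(1-S*U) - A*((S+U)^2-4)"
    by (simp add: algebra_simps power2_eq_square)
  have t1: "(2-(S+U))*(1-S*U) \<le> 0" using g assms(3) by (simp add: mult_nonpos_nonneg)
  have "(S+U)^2-4 = (S+U-2)*(S+U+2)" by (simp add: algebra_simps power2_eq_square)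
  also have "\<dots> > 0" using g by simp
  finally have pos: "(S+U)^2-4 > 0" .
  hence t2: "A*((S+U)^2-4) \<ge> 0" using assms(1) by simp
  have "A*((S+U)^2-4) = 0" using id t1 t2 assms(4) by linarith
  hence "A = 0" using pos by simp
  thus False using assms(2) g by simp
qed

lemma alg_pos:
  fixes p q S U \<alpha> :: real
  assumes pp: "p > 0" and qp: "q > 0"
  and D: "(p*\<alpha>*(q*S) + -q*\<alpha>*(p*U))^2 \<le> (2*p*q - p*(q*S) - q*(p*U) - 4*(p*\<alpha>)*(-q*\<alpha>))*(p*q-(p*U)*(q*S))
     \<and> 0 \<le> p*q-(p*U)*(q*S)"
  and g0: "0 \<le> 2*p*q - p*(q*S) - q*(p*U) - 4*(p*\<alpha>)*(-q*\<alpha>)"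
  shows "q*(p*U)+p*(q*S) \<le> 2*p*q"
proof -
  have pq: "p*q > 0" using pp qp by simp
  have g': "2*p*q - p*(q*S) - q*(p*U) - 4*(p*\<alpha>)*(-q*\<alpha>) = (p*q)*(2-(S+U)+4*\<alpha>^2)"
    by (simp add: algebra_simps power2_eq_square)
  have d': "p*q-(p*U)*(q*S) = (p*q)*(1-S*U)" by (simp add: algebra_simps)
  have n': "p*\<alpha>*(q*S) + -q*\<alpha>*(p*U) = (p*q)*(\<alpha>*(S-U))" by (simp add: algebra_simps)
  have h1: "0 \<le> 2-(S+U)+4*\<alpha>^2" using g0 pq unfolding g' by (simp add: zero_le_mult_iff)
  have h2: "0 \<le> 1-S*U" using D pq unfolding d' by (simp add: zero_le_mult_iff)
  have "(p*q)^2 * (\<alpha>*(S-U))^2 \<le> (p*q)^2 * ((2-(S+U)+4*\<alpha>^2)*(1-S*U))"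
    using conjunct1[OF D] unfolding g' d' n' power_mult_distrib by (simp add: mult.assoc mult.left_commute power2_eq_square)
  moreover have "(p*q)^2 > 0" using pq by (rule zero_less_power)
  ultimately have "(\<alpha>*(S-U))^2 \<le> (2-(S+U)+4*\<alpha>^2)*(1-S*U)" using mult_le_cancel_left_pos by blast
  hence h3: "\<alpha>^2*(S-U)^2 \<le> (2-(S+U)+4*\<alpha>^2)*(1-S*U)" by (simp add: power_mult_distrib)
  have "S+U \<le> 2" by (rule alg_norm[OF _ h1 h2 h3]) simp
  hence "(p*q)*(S+U) \<le> (p*q)*2" using pq by (intro mult_left_mono) simp_all
  thus ?thesis by (simp add: algebra_simps)
qed

lemma alg:
  fixes p q u s a b :: real
  assumes p: "0 \<le> p" and q: "0 \<le> q" and u: "0 \<le> u" and s: "0 \<le> s" and ab: "a^2 \<le> p*u" "b^2 \<le> q* s"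
    and h: "\<And>t. (p+2*a*t+u*t^2)*(q+2*b*t+s*t^2) \<le> p*q*(1+t^2)^2"
  shows "q*a+p*b = 0 \<and> q*u+p* s \<le> 2*p*q"
proof -
  define f where "f t = (p+2*a*t+u*t^2)*(q+2*b*t+s*t^2) - p*q*(1+t^2)^2" for t :: real
  have der: "DERIV f 0 :> 2*a*q+2*p*b" unfolding f_def
    by (rule derivative_eq_intros refl)+ simp
  have le: "\<forall>y. \<bar>0 - y\<bar> < 1 \<longrightarrow> f y \<le> f 0" using h by (simp add: f_def)
  have "2*a*q+2*p*b = 0" using DERIV_local_max[OF der zero_less_one le] .
  hence l: "q*a+p*b = 0" by (simp add: algebra_simps)
  define g where "g = 2*p*q - p* s - q*u - 4*a*b"
  define E where "E t = g - 2*(a* s+b*u)*t + (p*q-u* s)*t^2" for t :: real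
  have DE: "p*q*(1+t^2)^2 - (p+2*a*t+u*t^2)*(q+2*b*t+s*t^2) = t^2 * E t" for t
  proof -
    have "p*q*(1+t^2)^2 - (p+2*a*t+u*t^2)*(q+2*b*t+s*t^2) = -2*(q*a+p*b)*t + t^2 * E t"
      unfolding E_def g_def by (simp add: algebra_simps power2_eq_square power4_eq_xxxx)
    thus ?thesis using l by simp
  qed
  have Enz: "E t \<ge> 0" if "t \<noteq> 0" for t
  proof -
    have "t^2 * E t \<ge> 0" using h[of t] DE[of t] by simp
    thus ?thesis using that by (simp add: zero_le_mult_iff)
  qed
  have g0: "g \<ge> 0"
  proof (rule ccontr)
    assume "\<not> g \<ge> 0"
    hence gn: "g < 0" by simp
    have sum: "E h + E (-h) = 2*g + 2*(p*q-u* s)*h^2" for h unfolding E_def by (simp add: algebra_simps)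
    show False
    proof (cases "p*q-u* s \<le> 0")
      case True
      thus False using sum[of 1] Enz[of 1] Enz[of "-1"] gn by simp
    next
      case False
      define h where "h = sqrt (-g/(2*(p*q-u* s)))"
      have "-g/(2*(p*q-u* s)) \<ge> 0" using gn False by (intro divide_nonneg_pos) simp_all
      hence "h^2 = -g/(2*(p*q-u* s))" unfolding h_def by simp
      hence "2*(p*q-u* s)*h^2 = -g" using False by simp
      moreover have "h \<noteq> 0" unfolding h_def using gn False by (simp add: divide_pos_pos)
      ultimately show False using sum[of h] Enz[of h] Enz[of "-h"] gn by simp
    qed
  qed
  have Eall: "E t \<ge> 0" for t
    by (cases "t = 0") (use g0 Enz in \<open>auto simp: E_def\<close>)
  have D: "(a* s+b*u)^2 \<le> g*(p*q-u* s) \<and> 0 \<le> p*q-u* s"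
  proof -
    have "\<And>t. 0 \<le> g + 2*(-(a* s+b*u))*t + (p*q-u* s)*t^2" using Eall unfolding E_def by (simp add: algebra_simps)
    from discr[OF this] have "(- (a * s+b*u))^2 \<le> g*(p*q-u* s) \<and> 0 \<le> p*q-u* s" by simp
    thus ?thesis by (simp only: power2_minus)
  qed
  have "q*u+p* s \<le> 2*p*q"
  proof (cases "p = 0 \<or> q = 0")
    case True
    then show ?thesis
    proof
      assume "p = 0"
      hence "a = 0" using ab(1) by simp
      thus ?thesis using g0 \<open>p=0\<close> by (simp add: g_def)
    next
      assume "q = 0"
      hence "b = 0" using ab(2) by simp
      thus ?thesis using g0 \<open>q=0\<close> by (simp add: g_def)
    qed
  next
    case False
    hence pp: "p > 0" and qp: "q > 0" using p q by auto
    define \<alpha> where "\<alpha> = a/p"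
    define S where "S = s/q"
    define U where "U = u/p"
    have ea: "a = p*\<alpha>" and es: "s = q*S" and eu: "u = p*U" using pp qp by (auto simp: \<alpha>_def S_def U_def)
    have "p*b = -q*a" using l by simp
    hence "p*b = p*(-q*\<alpha>)" by (simp add: ea)
    hence eb: "b = -q*\<alpha>" using pp by (metis mult_left_cancel less_irrefl)
    show ?thesis using alg_pos[OF pp qp, where S=S and U=U and \<alpha>=\<alpha>] D g0 unfolding g_def ea eb es eu by simp
  qed
  with l show ?thesis by simp
qed
lemma transpose_diff: "transpose (A - B) = transpose A - (transpose B :: real^'n^'n)"
  by (simp add: transpose_def vec_eq_iff)

definition outer :: "real^'n \<Rightarrow> real^'n^'n" where
  "outer w = (\<chi> i j. w$i * w$j)"

lemma outer_mult: "outer w *v z = (w \<bullet> z) *\<^sub>R w"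
  by (simp add: outer_def matrix_vector_mult_def inner_vec_def vec_eq_iff sum_distrib_left mult_ac)

lemma inner_outer: "y \<bullet> (outer w *v y) = (w \<bullet> y)^2"
  by (simp add: outer_mult power2_eq_square inner_commute)

lemma sym_outer: "sym_mat (outer w)"
  by (simp add: sym_mat_def outer_def transpose_def vec_eq_iff mult.commute)

lemma trace_outer: "trace (B ** outer w) = w \<bullet> (B *v w)"
  by (simp add: trace_def outer_def matrix_matrix_mult_def matrix_vector_mult_def inner_vec_def
      sum_distrib_left mult_ac)

lemma trace_lin: "trace (B ** (X - c *\<^sub>R M)) = trace (B ** X) - c * trace (B ** M)"
  by (simp add: trace_def matrix_matrix_mult_def sum_subtractf sum_distrib_left algebra_simps)

lemma psd_cs:
  assumes "psd_mat X"
  shows "(y \<bullet> (X *v v))^2 \<le> (y \<bullet> (X *v y)) * (v \<bullet> (X *v v))"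
proof -
  have s: "sym_mat X" using assms by (simp add: psd_mat_def)
  have "\<And>t. 0 \<le> y \<bullet> (X *v y) + 2 * (y \<bullet> (X *v v)) * t + (v \<bullet> (X *v v)) * t^2"
  proof -
    fix t :: real
    have "0 \<le> (1 *\<^sub>R y + t *\<^sub>R v) \<bullet> (X *v (1 *\<^sub>R y + t *\<^sub>R v))" using assms by (simp add: psd_mat_def)
    also have "\<dots> = y \<bullet> (X *v y) + 2 * (y \<bullet> (X *v v)) * t + (v \<bullet> (X *v v)) * t^2"
      unfolding qf_comb[OF s] by (simp add: algebra_simps)
    finally show "0 \<le> y \<bullet> (X *v y) + 2 * (y \<bullet> (X *v v)) * t + (v \<bullet> (X *v v)) * t^2" .
  qed
  from discr[OF this] show ?thesis by simp
qed

lemma psd_zero: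
  assumes "psd_mat X" "v \<bullet> (X *v v) = 0"
  shows "X *v v = 0"
proof -
  have "((X *v v) \<bullet> (X *v v))^2 \<le> 0" using psd_cs[OF assms(1), of "X *v v" v] assms(2) by simp
  thus ?thesis by simp
qed

lemma trace_psd:
  fixes B X :: "real^'n^'n"
  assumes B: "psd_mat B"
  shows "psd_mat X \<Longrightarrow> 0 \<le> trace (B ** X)"
proof (induction "CARD('n) - dim {x. X *v x = 0}" arbitrary: X rule: less_induct)
  case less
  show ?case
  proof (cases "\<forall>v. X *v v = 0")
    case True
    hence "X = 0" by (metis matrix_eq matrix_vector_mult_0)
    thus ?thesis by (simp add: trace_def matrix_matrix_mult_def)
  next
    case False
    then obtain v where v: "X *v v \<noteq> 0" by blast
    have sX: "sym_mat X" using less.prems by (simp add: psd_mat_def)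
    define w where "w = X *v v"
    define c where "c = v \<bullet> (X *v v)"
    have c: "c > 0" using psd_zero[OF less.prems] v less.prems unfolding c_def psd_mat_def
      by (metis order_le_less)
    define X' where "X' = X - (1/c) *\<^sub>R outer w"
    have X'v: "X' *v v = 0"
      unfolding X'_def using c by (simp add: matrix_vector_mult_diff_rdistrib outer_mult c_def w_def inner_commute
        scaleR_matrix_vector_assoc[symmetric])
    have ker: "X' *v z = 0" if "X *v z = 0" for z
    proof -
      have "w \<bullet> z = v \<bullet> (X *v z)" unfolding w_def using sym_inner[OF sX, of z v] by (simp add: inner_commute)
      thus ?thesis unfolding X'_def using that 
        by (simp add: matrix_vector_mult_diff_rdistrib outer_mult scaleR_matrix_vector_assoc[symmetric])
    qed
    have psd': "psd_mat X'"
      unfolding psd_mat_def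
    proof
      show "sym_mat X'" using sX sym_outer[of w] unfolding X'_def sym_mat_def
        by (simp add: transpose_scalar transpose_diff)
      show "\<forall>y. 0 \<le> y \<bullet> (X' *v y)"
      proof
        fix y
        have "y \<bullet> (X' *v y) = y \<bullet> (X *v y) - (1/c) * (w \<bullet> y)^2"
          unfolding X'_def by (simp add: matrix_vector_mult_diff_rdistrib scaleR_matrix_vector_assoc[symmetric] inner_outer inner_diff_right)
        moreover have "(w \<bullet> y)^2 \<le> (y \<bullet> (X *v y)) * c"
          using psd_cs[OF less.prems, of y v] unfolding w_def c_def by (simp add: inner_commute)
        ultimately have "0 \<le> c * (y \<bullet> (X' *v y))" using c by (simp add: field_simps)
        thus "0 \<le> y \<bullet> (X' *v y)" using c by (simp add: zero_le_mult_iff)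
      qed
    qed
    have sub: "{x. X *v x = 0} \<subset> {x. X' *v x = 0}" using ker X'v v by auto
    have "dim {x. X *v x = 0} < dim {x. X' *v x = 0}"
    proof (rule dim_psubset)
      have "subspace {x. X *v x = 0}" "subspace {x. X' *v x = 0}"
        by (auto simp: subspace_def matrix_vector_right_distrib matrix_vector_mult_scaleR)
      hence e1: "span {x. X *v x = 0} = {x. X *v x = 0}" and e2: "span {x. X' *v x = 0} = {x. X' *v x = 0}"
        by (simp_all add: span_eq_iff)
      show "span {x. X *v x = 0} \<subset> span {x. X' *v x = 0}" unfolding e1 e2 by (rule sub)
    qed
    moreover have "dim {x. X' *v x = 0} \<le> CARD('n)" by (rule dim_subset_UNIV_cart)
    ultimately have "CARD('n) - dim {x. X' *v x = 0} < CARD('n) - dim {x. X *v x = 0}" by linarith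
    from less.hyps[OF this psd'] have "0 \<le> trace (B ** X')" .
    moreover have "trace (B ** X) = trace (B ** X') + (1/c) * trace (B ** outer w)"
      unfolding X'_def trace_lin by simp
    moreover have "0 \<le> trace (B ** outer w)" using B by (simp add: trace_outer psd_mat_def)
    ultimately show ?thesis using c by simp
  qed
qed
lemma orth_norm:
  assumes "norm v = 1" "norm w = 1" "v \<bullet> w = 0"
  shows "(a *\<^sub>R v + b *\<^sub>R w) \<bullet> (a *\<^sub>R v + b *\<^sub>R w) = a^2 + b^2"
proof -
  have "v \<bullet> v = 1" "w \<bullet> w = 1" using assms(1,2) by (simp_all add: norm_eq_1)
  thus ?thesis using assms(3) by (simp add: inner_add_left inner_add_right inner_commute power2_eq_square)
qed

lemma psd_nonneg: "psd_mat A \<Longrightarrow> 0 \<le> x \<bullet> (A *v x)"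
  by (simp add: psd_mat_def)

lemma psd_sym: "psd_mat A \<Longrightarrow> sym_mat A"
  by (simp add: psd_mat_def)

lemma key:
  fixes A1 A2 :: "real^'n^'n"
  assumes A1: "psd_mat A1" and A2: "psd_mat A2" and x0: "norm x0 = 1"
    and mx: "\<And>x. norm x = 1 \<Longrightarrow> (x \<bullet> (A1 *v x)) * (x \<bullet> (A2 *v x)) \<le> (x0 \<bullet> (A1 *v x0)) * (x0 \<bullet> (A2 *v x0))"
    and y: "norm y = 1"
  shows "(x0 \<bullet> (A2 *v x0)) * (y \<bullet> (A1 *v y)) + (x0 \<bullet> (A1 *v x0)) * (y \<bullet> (A2 *v y))
         \<le> 2 * (x0 \<bullet> (A1 *v x0)) * (x0 \<bullet> (A2 *v x0))"
proof -
  define p where "p = x0 \<bullet> (A1 *v x0)"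
  define q where "q = x0 \<bullet> (A2 *v x0)"
  have s1: "sym_mat A1" and s2: "sym_mat A2" using A1 A2 by (simp_all add: psd_mat_def)
  define \<alpha> where "\<alpha> = x0 \<bullet> y"
  define z where "z = y - \<alpha> *\<^sub>R x0"
  have x0x0: "x0 \<bullet> x0 = 1" using x0 by (simp add: norm_eq_1)
  show ?thesis
  proof (cases "z = 0")
    case True
    hence yy: "y = \<alpha> *\<^sub>R x0 + 0 *\<^sub>R x0" unfolding z_def by simp
    have "1 = y \<bullet> y" using y by (simp add: norm_eq_1)
    also have "\<dots> = \<alpha>^2" unfolding yy using x0x0 by (simp add: power2_eq_square)
    finally have a1: "\<alpha>^2 = 1" by simp
    have "y \<bullet> (A1 *v y) = p" unfolding p_def yy qf_comb[OF s1] using a1 by simp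
    moreover have "y \<bullet> (A2 *v y) = q" unfolding q_def yy qf_comb[OF s2] using a1 by simp
    ultimately show ?thesis unfolding p_def q_def by simp
  next
    case False
    define \<beta> where "\<beta> = norm z"
    define e where "e = (1/\<beta>) *\<^sub>R z"
    have bp: "\<beta> > 0" using False by (simp add: \<beta>_def)
    have e1: "norm e = 1" using bp by (simp add: e_def \<beta>_def)
    have x0e: "x0 \<bullet> e = 0" unfolding e_def z_def \<alpha>_def using x0x0 by (simp add: inner_diff_right)
    have ye: "y = \<alpha> *\<^sub>R x0 + \<beta> *\<^sub>R e" unfolding e_def z_def using bp by simp
    have ab1: "\<alpha>^2 + \<beta>^2 = 1" using orth_norm[OF x0 e1 x0e, of \<alpha> \<beta>] y ye by (simp add: norm_eq_1)
    define a where "a = x0 \<bullet> (A1 *v e)"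
    define b where "b = x0 \<bullet> (A2 *v e)"
    define u where "u = e \<bullet> (A1 *v e)"
    define s where "s = e \<bullet> (A2 *v e)"
    have P: "(c *\<^sub>R x0 + d *\<^sub>R e) \<bullet> (A1 *v (c *\<^sub>R x0 + d *\<^sub>R e)) = c^2*p + 2*c*d*a + d^2*u" for c d
      unfolding qf_comb[OF s1] p_def a_def u_def ..
    have Q: "(c *\<^sub>R x0 + d *\<^sub>R e) \<bullet> (A2 *v (c *\<^sub>R x0 + d *\<^sub>R e)) = c^2*q + 2*c*d*b + d^2* s" for c d
      unfolding qf_comb[OF s2] q_def b_def s_def ..
    have hyp: "(p+2*a*t+u*t^2)*(q+2*b*t+ s*t^2) \<le> p*q*(1+t^2)^2" for t
    proof -
      define r where "r = sqrt (1+t^2)"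
      have rp: "r > 0" unfolding r_def by (simp add: add_pos_nonneg)
      have r2: "r^2 = 1+t^2" unfolding r_def by (simp add: add_nonneg_nonneg)
      have n1: "norm ((1/r) *\<^sub>R x0 + (t/r) *\<^sub>R e) = 1"
      proof -
        have tp: "1+t^2 > 0" by (simp add: add_pos_nonneg)
        have "1 / (1 + t^2) + t^2 / (1 + t^2) = 1" using tp by (simp add: field_simps)
        thus ?thesis using orth_norm[OF x0 e1 x0e, of "1/r" "t/r"] r2 rp by (simp add: norm_eq_1 power_divide)
      qed
      define xt where "xt = (1/r) *\<^sub>R x0 + (t/r) *\<^sub>R e"
      have e1': "(1+t^2) * (xt \<bullet> (A1 *v xt)) = p+2*a*t+u*t^2"
        unfolding xt_def P using rp r2[symmetric] by (simp add: field_simps power2_eq_square)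
      have e2': "(1+t^2) * (xt \<bullet> (A2 *v xt)) = q+2*b*t+ s*t^2"
        unfolding xt_def Q using rp r2[symmetric] by (simp add: field_simps power2_eq_square)
      have le: "(xt \<bullet> (A1 *v xt)) * (xt \<bullet> (A2 *v xt)) \<le> p*q" using mx n1 unfolding xt_def p_def q_def by blast
      have "(p+2*a*t+u*t^2)*(q+2*b*t+ s*t^2) = (1+t^2)^2 * ((xt \<bullet> (A1 *v xt)) * (xt \<bullet> (A2 *v xt)))"
        unfolding e1'[symmetric] e2'[symmetric] by (simp add: power2_eq_square mult_ac)
      also have "\<dots> \<le> (1+t^2)^2 * (p*q)" using le by (intro mult_left_mono) simp_all
      finally show ?thesis by (simp add: mult_ac)
    qed
    have "q*a+p*b = 0 \<and> q*u+p* s \<le> 2*p*q"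
    proof (rule alg[OF _ _ _ _ _ _ hyp])
      show "0 \<le> p" "0 \<le> q" "0 \<le> u" "0 \<le> s" unfolding p_def q_def u_def s_def
        using A1 A2 by (simp_all add: psd_nonneg)
      show "a^2 \<le> p*u" using psd_cs[OF A1, of x0 e] unfolding a_def p_def u_def .
      show "b^2 \<le> q* s" using psd_cs[OF A2, of x0 e] unfolding b_def q_def s_def .
    qed
    hence l1: "q*a+p*b = 0" and l2: "q*u+p* s \<le> 2*p*q" by auto
    have "q * (y \<bullet> (A1 *v y)) + p * (y \<bullet> (A2 *v y)) = 2*p*q*\<alpha>^2 + 2*\<alpha>*\<beta>*(q*a+p*b) + \<beta>^2*(q*u+p* s)"
      unfolding ye P Q by (simp add: algebra_simps)
    also have "\<dots> \<le> 2*p*q*\<alpha>^2 + \<beta>^2*(2*p*q)" using l1 l2 by (simp add: mult_left_mono)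
    also have "\<dots> = 2*p*q" using ab1 by (simp add: algebra_simps) (metis mult.commute mult_1 distrib_left)
    finally show ?thesis unfolding p_def q_def .
  qed
qed
lemma trace_N:
  fixes B C X :: "real^'n^'n"
  shows "trace ((a *\<^sub>R mat 1 - b *\<^sub>R B - c *\<^sub>R C) ** X) = a * trace X - b * trace (B ** X) - c * trace (C ** X)"
proof -
  have "trace ((a *\<^sub>R mat 1 - b *\<^sub>R B - c *\<^sub>R C) ** X) = trace ((a *\<^sub>R mat 1) ** X) - b * trace (B ** X) - c * trace (C ** X)"
    by (simp add: trace_def matrix_matrix_mult_def sum_subtractf sum_distrib_left sum.distrib algebra_simps)
  moreover have "(a *\<^sub>R mat 1) ** X = a *\<^sub>R X"
  proof -
    have "\<And>i j. (\<Sum>k\<in>UNIV. a * (if i = k then 1 else 0) * X $ k $ j) = a * X $ i $ j"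
    proof -
      fix i j
      have "(\<Sum>k\<in>UNIV. a * (if i = k then 1 else 0) * X $ k $ j) = (\<Sum>k\<in>UNIV. if i = k then a * X $ k $ j else 0)"
        by (rule sum.cong) auto
      thus "(\<Sum>k\<in>UNIV. a * (if i = k then 1 else 0) * X $ k $ j) = a * X $ i $ j" by simp
    qed
    thus ?thesis by (simp add: matrix_matrix_mult_def mat_def vec_eq_iff)
  qed
  moreover have "trace (a *\<^sub>R X) = a * trace X" by (simp add: trace_def sum_distrib_left)
  ultimately show ?thesis by simp
qed

lemma gsdp:
  fixes A1 A2 X :: "real^'n^'n"
  assumes A1: "psd_mat A1" and A2: "psd_mat A2" and x0: "norm x0 = 1"
    and mx: "\<And>x. norm x = 1 \<Longrightarrow> (x \<bullet> (A1 *v x)) * (x \<bullet> (A2 *v x)) \<le> (x0 \<bullet> (A1 *v x0)) * (x0 \<bullet> (A2 *v x0))"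
    and X: "psd_mat X" and tX: "trace X = 1"
  shows "(x0 \<bullet> (A2 *v x0)) * trace (A1 ** X) + (x0 \<bullet> (A1 *v x0)) * trace (A2 ** X)
         \<le> 2 * (x0 \<bullet> (A1 *v x0)) * (x0 \<bullet> (A2 *v x0))"
proof -
  define p where "p = x0 \<bullet> (A1 *v x0)"
  define q where "q = x0 \<bullet> (A2 *v x0)"
  have s1: "sym_mat A1" and s2: "sym_mat A2" using A1 A2 by (simp_all add: psd_mat_def)
  define N where "N = (2*p*q) *\<^sub>R mat 1 - q *\<^sub>R A1 - p *\<^sub>R A2"
  have Ny: "y \<bullet> (N *v y) = 2*p*q*(y \<bullet> y) - q * (y \<bullet> (A1 *v y)) - p * (y \<bullet> (A2 *v y))" for y
    unfolding N_def by (simp add: matrix_vector_mult_diff_rdistrib scaleR_matrix_vector_assoc[symmetric] inner_diff_right)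
  have "psd_mat N"
    unfolding psd_mat_def
  proof
    show "sym_mat N" using s1 s2 unfolding N_def sym_mat_def by (simp add: transpose_diff transpose_scalar transpose_mat)
    show "\<forall>y. 0 \<le> y \<bullet> (N *v y)"
    proof
      fix y :: "real^'n"
      show "0 \<le> y \<bullet> (N *v y)"
      proof (cases "y = 0")
        case True thus ?thesis by simp
      next
        case False
        define yh where "yh = (1/norm y) *\<^sub>R y"
        have yh1: "norm yh = 1" using False by (simp add: yh_def)
        have yy: "y = norm y *\<^sub>R yh + 0 *\<^sub>R yh" using False by (simp add: yh_def)
        have P1: "y \<bullet> (A1 *v y) = (norm y)^2 * (yh \<bullet> (A1 *v yh))"
        proof -
          have "(norm y *\<^sub>R yh + 0 *\<^sub>R yh) \<bullet> (A1 *v (norm y *\<^sub>R yh + 0 *\<^sub>R yh)) = (norm y)^2 * (yh \<bullet> (A1 *v yh))"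
            by (simp only: qf_comb[OF s1]) simp
          thus ?thesis using yy by metis
        qed
        have P2: "y \<bullet> (A2 *v y) = (norm y)^2 * (yh \<bullet> (A2 *v yh))"
        proof -
          have "(norm y *\<^sub>R yh + 0 *\<^sub>R yh) \<bullet> (A2 *v (norm y *\<^sub>R yh + 0 *\<^sub>R yh)) = (norm y)^2 * (yh \<bullet> (A2 *v yh))"
            by (simp only: qf_comb[OF s2]) simp
          thus ?thesis using yy by metis
        qed
        have K: "q * (yh \<bullet> (A1 *v yh)) + p * (yh \<bullet> (A2 *v yh)) \<le> 2*p*q"
          using key[OF A1 A2 x0 mx yh1] unfolding p_def q_def by blast
        have "(norm y)^2 * (q * (yh \<bullet> (A1 *v yh)) + p * (yh \<bullet> (A2 *v yh))) \<le> (norm y)^2 * (2*p*q)"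
          using K by (intro mult_left_mono) simp_all
        thus ?thesis unfolding Ny P1 P2 by (simp add: power2_norm_eq_inner algebra_simps)
      qed
    qed
  qed
  from trace_psd[OF this X] have "0 \<le> trace (N ** X)" .
  thus ?thesis unfolding N_def trace_N tX p_def q_def by simp
qed
lemma qf_scale:
  assumes "sym_mat A"
  shows "y \<bullet> (A *v y) = (norm y)^2 * (((1/norm y) *\<^sub>R y) \<bullet> (A *v ((1/norm y) *\<^sub>R y)))"
proof (cases "y = 0")
  case True thus ?thesis by simp
next
  case False
  define yh where "yh = (1/norm y) *\<^sub>R y"
  have yy: "y = norm y *\<^sub>R yh + 0 *\<^sub>R yh" using False by (simp add: yh_def)
  have "(norm y *\<^sub>R yh + 0 *\<^sub>R yh) \<bullet> (A *v (norm y *\<^sub>R yh + 0 *\<^sub>R yh)) = (norm y)^2 * (yh \<bullet> (A *v yh))"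
    by (simp only: qf_comb[OF assms]) simp
  thus ?thesis using yy unfolding yh_def by metis
qed

lemma trace_neg: "trace ((- A) ** X) = - trace (A ** (X::real^'n^'n))"
  by (simp add: trace_def matrix_matrix_mult_def sum_negf)

lemma sdp_bound:
  fixes A1 A2 X :: "real^'n^'n"
  assumes A1: "psd_mat A1" and A2: "psd_mat A2" and x0: "norm x0 = 1"
    and mx: "\<And>x. norm x = 1 \<Longrightarrow> (x \<bullet> (A1 *v x)) * (x \<bullet> (A2 *v x)) \<le> (x0 \<bullet> (A1 *v x0)) * (x0 \<bullet> (A2 *v x0))"
    and X: "psd_mat X" and tX: "trace X = 1"
  shows "trace (A1 ** X) * trace (A2 ** X) \<le> (x0 \<bullet> (A1 *v x0)) * (x0 \<bullet> (A2 *v x0))"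
proof -
  define p where "p = x0 \<bullet> (A1 *v x0)"
  define q where "q = x0 \<bullet> (A2 *v x0)"
  define T1 where "T1 = trace (A1 ** X)"
  define T2 where "T2 = trace (A2 ** X)"
  have T1: "T1 \<ge> 0" unfolding T1_def by (rule trace_psd[OF A1 X])
  have T2: "T2 \<ge> 0" unfolding T2_def by (rule trace_psd[OF A2 X])
  have p: "p \<ge> 0" "q \<ge> 0" unfolding p_def q_def using A1 A2 by (simp_all add: psd_nonneg)
  have G: "q*T1 + p*T2 \<le> 2*p*q" using gsdp[OF A1 A2 x0 mx X tX] unfolding p_def q_def T1_def T2_def .
  have "T1 * T2 \<le> p * q"
  proof (cases "p > 0 \<and> q > 0")
    case True
    have "0 \<le> q*T1 + p*T2" using T1 T2 p by simp
    hence "(q*T1 + p*T2)^2 \<le> (2*p*q)^2" using G by (intro power_mono) simp_all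
    moreover have "4*(q*T1)*(p*T2) \<le> (q*T1 + p*T2)^2"
    proof -
      have "0 \<le> (q*T1 - p*T2)^2" by simp
      thus ?thesis by (simp add: power2_eq_square algebra_simps)
    qed
    ultimately have "(4*(p*q)) * (T1*T2) \<le> (4*(p*q)) * (p*q)" by (simp add: power2_eq_square mult_ac)
    moreover have "4*(p*q) > 0" using True by simp
    ultimately show ?thesis using mult_le_cancel_left_pos by blast
  next
    case False
    hence pq0: "p = 0 \<or> q = 0" using p by auto
    have "T1 = 0 \<or> T2 = 0"
    proof (cases "p > 0")
      case True
      hence "q = 0" using pq0 by simp
      hence "p*T2 \<le> 0" using G by simp
      hence "T2 \<le> 0" using True by (simp add: mult_le_0_iff)
      thus ?thesis using T2 by simp
    next
      case pn: False
      hence p0: "p = 0" using p by simp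
      show ?thesis
      proof (cases "q > 0")
        case True
        hence "q*T1 \<le> 0" using G p0 by simp
        hence "T1 \<le> 0" using True by (simp add: mult_le_0_iff)
        thus ?thesis using T1 by simp
      next
        case False
        hence q0: "q = 0" using p by simp
        show ?thesis
        proof (cases "\<exists>x1. norm x1 = 1 \<and> x1 \<bullet> (A1 *v x1) > 0")
          case True
          then obtain x1 where x1: "norm x1 = 1" "x1 \<bullet> (A1 *v x1) > 0" by blast
          have F0: "(x1 \<bullet> (A1 *v x1)) * (x1 \<bullet> (A2 *v x1)) \<le> 0" using mx[OF x1(1)] p0 unfolding p_def by simp
          have "x1 \<bullet> (A2 *v x1) \<ge> 0" using A2 by (simp add: psd_nonneg)
          hence Q1: "x1 \<bullet> (A2 *v x1) = 0" using F0 x1(2) by (simp add: mult_le_0_iff)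
          have mx1: "(x \<bullet> (A1 *v x)) * (x \<bullet> (A2 *v x)) \<le> (x1 \<bullet> (A1 *v x1)) * (x1 \<bullet> (A2 *v x1))"
            if "norm x = 1" for x using mx[OF that] p0 Q1 unfolding p_def by simp
          from gsdp[OF A1 A2 x1(1) mx1 X tX] Q1
          have "(x1 \<bullet> (A1 *v x1)) * T2 \<le> 0" unfolding T2_def by simp
          hence "T2 \<le> 0" using x1(2) by (simp add: mult_le_0_iff)
          thus ?thesis using T2 by simp
        next
          case False
          have z: "y \<bullet> (A1 *v y) = 0" for y
          proof -
            have "((1/norm y) *\<^sub>R y) \<bullet> (A1 *v ((1/norm y) *\<^sub>R y)) = 0"
            proof (cases "y = 0")
              case True thus ?thesis by simp
            next
              case yn: False
              have "norm ((1/norm y) *\<^sub>R y) = 1" using yn by simp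
              hence "\<not> ((1/norm y) *\<^sub>R y) \<bullet> (A1 *v ((1/norm y) *\<^sub>R y)) > 0" using False by blast
              moreover have "((1/norm y) *\<^sub>R y) \<bullet> (A1 *v ((1/norm y) *\<^sub>R y)) \<ge> 0" using psd_nonneg[OF A1] by blast
              ultimately show ?thesis by simp
            qed
            thus ?thesis using qf_scale[OF psd_sym[OF A1], of y] by simp
          qed
          have "psd_mat (- A1)" using psd_sym[OF A1] z
            unfolding psd_mat_def sym_mat_def by (simp add: transpose_def vec_eq_iff matrix_vector_mult_def inner_vec_def sum_negf)
          from trace_psd[OF this X] have "T1 \<le> 0" unfolding T1_def trace_neg by simp
          thus ?thesis using T1 by simp
        qed
      qed
    qed
    moreover have "p * q = 0" using pq0 by auto
    ultimately show ?thesis by auto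
  qed
  thus ?thesis unfolding p_def q_def T1_def T2_def .
qed

theorem mainTheorem6:
  fixes A1 A2 :: "real^'n^'n"
  assumes "psd_mat A1" and "psd_mat A2"
  shows "Opt2 A1 A2 = OptSDP2 A1 A2"
proof -
  note A1 = assms(1) and A2 = assms(2)
  define F where "F x = (x \<bullet> (A1 *v x)) * (x \<bullet> (A2 *v x))" for x :: "real^'n"
  have "\<exists>x\<in>sphere 0 1. \<forall>y\<in>sphere 0 1. F y \<le> F x"
    by (rule continuous_attains_sup) (auto simp: F_def intro!: continuous_intros)
  then obtain x0 where x0: "norm x0 = 1" and mx: "\<And>x. norm x = 1 \<Longrightarrow> F x \<le> F x0" by auto
  have Fn: "F x \<ge> 0" for x unfolding F_def using A1 A2 by (simp add: psd_nonneg)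
  define c where "c = F x0"
  have opt: "Opt2 A1 A2 = sqrt c"
    unfolding Opt2_def
  proof (rule cSup_eq_maximum)
    show "sqrt c \<in> {((x \<bullet> (A1 *v x)) * (x \<bullet> (A2 *v x))) powr (1/2) |x. norm x = 1}"
    proof -
      have "sqrt c = ((x0 \<bullet> (A1 *v x0)) * (x0 \<bullet> (A2 *v x0))) powr (1/2)"
        using Fn[of x0] by (simp add: c_def F_def powr_half_sqrt)
      thus ?thesis using x0 by blast
    qed
    fix z assume "z \<in> {((x \<bullet> (A1 *v x)) * (x \<bullet> (A2 *v x))) powr (1/2) |x. norm x = 1}"
    then obtain x where "norm x = 1" "z = (F x) powr (1/2)" by (auto simp: F_def)
    thus "z \<le> sqrt c" using mx[of x] Fn[of x] by (simp add: powr_half_sqrt c_def)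
  qed
  have sdp: "OptSDP2 A1 A2 = sqrt c"
    unfolding OptSDP2_def
  proof (rule cSup_eq_maximum)
    have "psd_mat (outer x0)" unfolding psd_mat_def using sym_outer[of x0] by (simp add: inner_outer)
    moreover have "trace (outer x0) = 1"
    proof -
      have "x0 \<bullet> x0 = 1" using x0 by (simp add: norm_eq_1)
      thus ?thesis by (simp add: trace_def outer_def inner_vec_def)
    qed
    moreover have "(trace (A1 ** outer x0) * trace (A2 ** outer x0)) powr (1/2) = sqrt c"
      using Fn[of x0] by (simp add: trace_outer c_def F_def powr_half_sqrt)
    ultimately show "sqrt c \<in> {(trace (A1 ** X) * trace (A2 ** X)) powr (1/2) |X. psd_mat X \<and> trace X = 1}"
      by (metis (mono_tags, lifting) mem_Collect_eq)
    fix z assume "z \<in> {(trace (A1 ** X) * trace (A2 ** X)) powr (1/2) |X. psd_mat X \<and> trace X = 1}"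
    then obtain X where X: "psd_mat X" "trace X = 1" and z: "z = (trace (A1 ** X) * trace (A2 ** X)) powr (1/2)" by auto
    have nn: "0 \<le> trace (A1 ** X) * trace (A2 ** X)" using trace_psd[OF A1 X(1)] trace_psd[OF A2 X(1)] by simp
    have "trace (A1 ** X) * trace (A2 ** X) \<le> c"
      using sdp_bound[OF A1 A2 x0 _ X] mx unfolding c_def F_def by blast
    thus "z \<le> sqrt c" using nn by (simp add: z powr_half_sqrt)
  qed
  show ?thesis using opt sdp by simp
qed
end
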